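(* Let $k$ be a positive integer. If $G$ is a simple graph with $\operatorname{ex}(G,P_3)<k$, then $e(G)\leq\binom{k}{2}+\mathbf{1}_{k=3}$. Consequently $\mathcal{E}_{P_3}(k)=\binom{k}{2}+\mathbf{1}_{k=3}$.
   Context: $P_3$ denotes the path with 3 edges (4 vertices). Graphs are simple, 2-uniform, without isolated vertices. $\operatorname{ex}(G,H)$ is the maximum number of edges in a subgraph of $G$ containing no copy of $H$, and $\mathcal{E}_H(k):=\sup\{e(G): G\text{ simple}, \operatorname{ex}(G,H)<k\}$. $\mathbf{1}_{k=3}$ equals $1$ if $k=3$ and $0$ otherwise. *)

theory Defs
  imports Main "HOL-Library.Extended_Nat"
begin

text \<open>A simple graph without isolated vertices is represented by its finite set of
edges, each edge being a 2-element set of vertices. The vertex set is the union of the edges.\<close>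

definition simple_graph :: "'a set set \<Rightarrow> bool" where
  "simple_graph G \<longleftrightarrow> finite G \<and> (\<forall>e\<in>G. card e = 2)"

definition num_edges :: "'a set set \<Rightarrow> nat" where
  "num_edges G = card G"

definition contains_copy :: "'a set set \<Rightarrow> 'b set set \<Rightarrow> bool" where
  "contains_copy F H \<longleftrightarrow> (\<exists>f. inj_on f (\<Union>H) \<and> (\<forall>e\<in>H. f ` e \<in> F))"

definition ex :: "'a set set \<Rightarrow> 'b set set \<Rightarrow> nat" where
  "ex G H = Max {card F | F. F \<subseteq> G \<and> \<not> contains_copy F H}"

definition P3 :: "nat set set" where
  "P3 = {{0,1},{1,2},{2,3}}"

text \<open>E_H(k) = sup of e(G) over simple graphs G with ex(G,H) < k (vertices taken from nat,
which suffices since graphs are finite).\<close>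
definition E_H :: "'b set set \<Rightarrow> nat \<Rightarrow> enat" where
  "E_H H k = Sup {enat (num_edges G) | G :: nat set set. simple_graph G \<and> ex G H < k}"

end

theory Submission
  imports Defs
begin

definition pf :: "'a set set \<Rightarrow> bool" where
  "pf F \<longleftrightarrow> \<not>(\<exists>a b c d. a\<noteq>b \<and> a\<noteq>c \<and> a\<noteq>d \<and> b\<noteq>c \<and> b\<noteq>d \<and> c\<noteq>d \<and>
      {a,b}\<in>F \<and> {b,c}\<in>F \<and> {c,d}\<in>F)"

lemma copy_iff: "contains_copy F P3 \<longleftrightarrow> \<not> pf F"
proof
  assume "contains_copy F P3"
  then obtain f where inj: "inj_on f (\<Union>P3)" and fe: "\<forall>e\<in>P3. f ` e \<in> F"
    unfolding contains_copy_def by blast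
  have U: "\<Union>P3 = {0,1,2,3}" unfolding P3_def by auto
  have "f ` {0,1} \<in> F" "f ` {1,2} \<in> F" "f ` {2,3} \<in> F" using fe unfolding P3_def by auto
  hence e: "{f 0, f 1} \<in> F" "{f 1, f 2} \<in> F" "{f 2, f 3} \<in> F" by auto
  have d: "f 0 \<noteq> f 1" "f 0 \<noteq> f 2" "f 0 \<noteq> f 3" "f 1 \<noteq> f 2" "f 1 \<noteq> f 3" "f 2 \<noteq> f 3"
    using inj unfolding U inj_on_def by auto
  show "\<not> pf F" unfolding pf_def using e d by blast
next
  assume "\<not> pf F"
  then obtain a b c d where h: "a\<noteq>b" "a\<noteq>c" "a\<noteq>d" "b\<noteq>c" "b\<noteq>d" "c\<noteq>d"
      "{a,b}\<in>F" "{b,c}\<in>F" "{c,d}\<in>F" unfolding pf_def by blast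
  define f where "f = (\<lambda>i::nat. if i = 0 then a else if i = 1 then b else if i = 2 then c else d)"
  have U: "\<Union>P3 = {0,1,2,3}" unfolding P3_def by auto
  have "inj_on f (\<Union>P3)" unfolding U inj_on_def f_def using h by auto
  moreover have "\<forall>e\<in>P3. f ` e \<in> F" unfolding P3_def f_def using h by (auto simp: insert_commute)
  ultimately show "contains_copy F P3" unfolding contains_copy_def by blast
qed

lemma pf_subset: "pf F \<Longrightarrow> F' \<subseteq> F \<Longrightarrow> pf F'"
  unfolding pf_def by blast

definition star :: "'a \<Rightarrow> 'a set \<Rightarrow> 'a set set" where
  "star x L = (\<lambda>l. {x,l}) ` L"

definition tri :: "'a \<Rightarrow> 'a \<Rightarrow> 'a \<Rightarrow> 'a set set" where
  "tri x y z = {{x,y},{y,z},{x,z}}"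

lemma doubleton_eq: "{a,b} = {c,d} \<longleftrightarrow> (a = c \<and> b = d) \<or> (a = d \<and> b = c)"
  by (auto simp: doubleton_eq_iff)

lemma pf_star: "pf (star x L)"
proof -
  { fix a b c d assume h: "{a,b} \<in> star x L" "{c,d} \<in> star x L"
      and nd: "a\<noteq>c" "a\<noteq>d" "b\<noteq>c" "b\<noteq>d"
    have "x \<in> {a,b}" "x \<in> {c,d}" using h unfolding star_def by auto
    hence False using nd by auto }
  thus ?thesis unfolding pf_def by blast
qed

lemma pf_tri: "pf (tri x y z)"
proof -
  { fix a b c d assume h: "{a,b} \<in> tri x y z" "{b,c} \<in> tri x y z" "{c,d} \<in> tri x y z"
      and nd: "a\<noteq>b" "a\<noteq>c" "a\<noteq>d" "b\<noteq>c" "b\<noteq>d" "c\<noteq>d"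
    have sub: "{a,b,c,d} \<subseteq> {x,y,z}" using h unfolding tri_def by blast
    have "card {a,b,c,d} = 4" using nd by simp
    moreover have "card {x,y,z} \<le> 3" by (simp add: card_insert_le_m1)
    ultimately have False using card_mono[OF _ sub] by simp }
  thus ?thesis unfolding pf_def by blast
qed

lemma pf_union:
  assumes "pf F1" "pf F2" "\<Union>F1 \<inter> \<Union>F2 = {}"
  shows "pf (F1 \<union> F2)"
proof -
  { fix a b c d assume h: "{a,b}\<in>F1 \<union> F2" "{b,c}\<in>F1 \<union> F2" "{c,d}\<in>F1 \<union> F2"
      and nd: "a\<noteq>b" "a\<noteq>c" "a\<noteq>d" "b\<noteq>c" "b\<noteq>d" "c\<noteq>d"
    have "({a,b}\<in>F1 \<and> {b,c}\<in>F1 \<and> {c,d}\<in>F1) \<or> ({a,b}\<in>F2 \<and> {b,c}\<in>F2 \<and> {c,d}\<in>F2)"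
    proof -
      have b1: "{a,b}\<in>F1 \<Longrightarrow> {b,c}\<in>F2 \<Longrightarrow> False" using assms(3) by blast
      have b2: "{a,b}\<in>F2 \<Longrightarrow> {b,c}\<in>F1 \<Longrightarrow> False" using assms(3) by blast
      have c1: "{b,c}\<in>F1 \<Longrightarrow> {c,d}\<in>F2 \<Longrightarrow> False" using assms(3) by blast
      have c2: "{b,c}\<in>F2 \<Longrightarrow> {c,d}\<in>F1 \<Longrightarrow> False" using assms(3) by blast
      show ?thesis using h b1 b2 c1 c2 by blast
    qed
    hence False using assms(1,2) nd unfolding pf_def by blast }
  thus ?thesis unfolding pf_def by blast
qed

lemma card_star: "finite L \<Longrightarrow> x \<notin> L \<Longrightarrow> card (star x L) = card L"
  unfolding star_def
  by (rule card_image) (auto simp: inj_on_def doubleton_eq_iff)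

lemma Union_star: "\<Union>(star x L) \<subseteq> insert x L"
  unfolding star_def by auto

lemma card_tri: "x \<noteq> y \<Longrightarrow> y \<noteq> z \<Longrightarrow> x \<noteq> z \<Longrightarrow> card (tri x y z) = 3"
  unfolding tri_def by (simp add: doubleton_eq_iff)

lemma Union_tri: "\<Union>(tri x y z) = {x,y,z}"
  unfolding tri_def by auto

definition sg :: "'a set set \<Rightarrow> bool" where
  "sg G \<longleftrightarrow> finite G \<and> (\<forall>e\<in>G. card e = 2)"

lemma card_union_edges:
  assumes "sg G" "F1 \<subseteq> G" "F2 \<subseteq> G" "\<Union>F1 \<inter> \<Union>F2 = {}"
  shows "card (F1 \<union> F2) = card F1 + card F2"
proof -
  have "F1 \<inter> F2 = {}"
  proof (rule ccontr)
    assume "F1 \<inter> F2 \<noteq> {}"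
    then obtain e where "e \<in> F1" "e \<in> F2" by blast
    moreover have "e \<noteq> {}" using assms(1,2) \<open>e\<in>F1\<close> unfolding sg_def by fastforce
    ultimately show False using assms(4) by blast
  qed
  moreover have "finite F1" "finite F2" using assms unfolding sg_def by (auto intro: finite_subset)
  ultimately show ?thesis by (simp add: card_Un_disjoint)
qed

lemma fin_ex: "finite G \<Longrightarrow> finite {card F | F. F \<subseteq> G \<and> \<not> contains_copy F (H::'b set set)}"
proof -
  assume "finite G"
  have "{card F | F. F \<subseteq> G \<and> \<not> contains_copy F H} \<subseteq> card ` Pow G" by blast
  thus ?thesis using \<open>finite G\<close> by (meson finite_Pow_iff finite_imageI finite_subset)
qed

lemma ex_ge:
  assumes "finite G" "F \<subseteq> G" "pf F"
  shows "card F \<le> ex G P3"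
proof -
  have fin: "finite {card F | F. F \<subseteq> G \<and> \<not> contains_copy F P3}"
    using fin_ex assms(1) by blast
  show ?thesis unfolding ex_def
    by (rule Max_ge[OF fin]) (use assms copy_iff in blast)
qed

lemma ex_attained:
  assumes "finite G"
  obtains F where "F \<subseteq> G" "pf F" "card F = ex G P3"
proof -
  have fin: "finite {card F | F. F \<subseteq> G \<and> \<not> contains_copy F P3}"
    using fin_ex assms(1) by blast
  have "pf ({}::'a set set)" unfolding pf_def by blast
  hence "\<not> contains_copy ({}::'a set set) P3" using copy_iff by blast
  hence "card ({}::'a set set) \<in> {card F | F. F \<subseteq> G \<and> \<not> contains_copy F P3}" by blast
  hence ne: "{card F | F. F \<subseteq> G \<and> \<not> contains_copy F P3} \<noteq> {}" by blast
  have "ex G P3 \<in> {card F | F. F \<subseteq> G \<and> \<not> contains_copy F P3}"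
    unfolding ex_def using Max_in[OF fin ne] .
  then obtain F where F: "ex G P3 = card F" "F \<subseteq> G" "\<not> contains_copy F P3" by blast
  have "pf F" using F(3) copy_iff by blast
  show ?thesis using that[of F] F \<open>pf F\<close> by simp
qed


definition nb :: "'a set set \<Rightarrow> 'a \<Rightarrow> 'a set" where
  "nb G v = {u. {v,u} \<in> G}"

lemma nb_sym: "u \<in> nb G v \<longleftrightarrow> v \<in> nb G u"
  unfolding nb_def by (simp add: insert_commute)

lemma nb_irr: "sg G \<Longrightarrow> v \<notin> nb G v"
  unfolding nb_def sg_def by force

lemma nb_sub: "nb G v \<subseteq> \<Union>G"
  unfolding nb_def by blast

lemma sg_fin_U: "sg G \<Longrightarrow> finite (\<Union>G)"
proof -
  assume "sg G"
  hence "finite G" "\<forall>e\<in>G. finite e" unfolding sg_def by (auto intro: card_ge_0_finite)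
  thus ?thesis by blast
qed

lemma nb_fin: "sg G \<Longrightarrow> finite (nb G v)"
  by (meson finite_subset nb_sub sg_fin_U)

lemma sg_edge: "sg G \<Longrightarrow> e \<in> G \<Longrightarrow> \<exists>a b. a \<noteq> b \<and> e = {a,b}"
  unfolding sg_def by (meson card_2_iff)

lemma inc_card:
  assumes "sg G"
  shows "card {e\<in>G. v\<in>e \<and> P e} = card {u\<in>nb G v. P {v,u}}"
proof -
  have "{e\<in>G. v\<in>e \<and> P e} = (\<lambda>u. {v,u}) ` {u\<in>nb G v. P {v,u}}"
  proof (intro equalityI subsetI)
    fix e assume "e \<in> {e\<in>G. v\<in>e \<and> P e}"
    then obtain a b where ab: "a\<noteq>b" "e = {a,b}" "e\<in>G" "v\<in>e" "P e" using sg_edge[OF assms] by blast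
    then obtain u where "e = {v,u}" by blast
    thus "e \<in> (\<lambda>u. {v,u}) ` {u\<in>nb G v. P {v,u}}" using ab unfolding nb_def by auto
  qed (auto simp: nb_def)
  moreover have "inj_on (\<lambda>u. {v,u}) {u\<in>nb G v. P {v,u}}"
    by (auto simp: inj_on_def doubleton_eq_iff)
  ultimately show ?thesis by (simp add: card_image)
qed

lemma double_count:
  assumes "finite G" "finite S"
  shows "(\<Sum>v\<in>S. card {e\<in>G. v\<in>e \<and> P e}) = (\<Sum>e\<in>{e\<in>G. P e}. card (e \<inter> S))"
proof -
  have "(\<Sum>v\<in>S. card {e\<in>G. v\<in>e \<and> P e}) = (\<Sum>v\<in>S. \<Sum>e\<in>{e\<in>G. P e}. if v \<in> e then 1 else 0)"
  proof (rule sum.cong[OF refl])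
    fix v assume "v \<in> S"
    have "{e\<in>G. v\<in>e \<and> P e} = {e\<in>{e\<in>G. P e}. v \<in> e}" by blast
    moreover have "finite {e\<in>G. P e}" using assms(1) by simp
    ultimately show "card {e\<in>G. v\<in>e \<and> P e} = (\<Sum>e\<in>{e\<in>G. P e}. if v \<in> e then 1 else 0)"
      using sum.inter_filter[of "{e\<in>G. P e}" "\<lambda>_. 1::nat" "\<lambda>e. v \<in> e"] card_eq_sum by simp
  qed
  also have "\<dots> = (\<Sum>e\<in>{e\<in>G. P e}. \<Sum>v\<in>S. if v \<in> e then 1 else 0)"
    by (rule sum.swap)
  also have "\<dots> = (\<Sum>e\<in>{e\<in>G. P e}. card (e \<inter> S))"
  proof (rule sum.cong[OF refl])
    fix e
    have "{v\<in>S. v\<in>e} = e \<inter> S" by blast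
    thus "(\<Sum>v\<in>S. if v \<in> e then 1 else 0) = card (e \<inter> S)"
      using sum.inter_filter[of S "\<lambda>_. 1::nat" "\<lambda>v. v \<in> e"] assms(2) card_eq_sum by simp
  qed
  finally show ?thesis .
qed


lemma card_inter_edge:
  assumes "sg G" "e \<in> G"
  shows "e \<subseteq> X \<Longrightarrow> card (e \<inter> X) = 2"
    and "\<not> e \<subseteq> X \<Longrightarrow> card (e \<inter> X) = (if e \<inter> X \<noteq> {} then 1 else 0)"
proof -
  obtain a b where ab: "a \<noteq> b" "e = {a,b}" using sg_edge[OF assms] by blast
  show "e \<subseteq> X \<Longrightarrow> card (e \<inter> X) = 2" using ab by (simp add: Int_absorb2)
  show "\<not> e \<subseteq> X \<Longrightarrow> card (e \<inter> X) = (if e \<inter> X \<noteq> {} then 1 else 0)"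
    using ab by (cases "a \<in> X"; cases "b \<in> X") auto
qed

locale kstep =
  fixes G :: "'a set set" and c :: 'a and d s :: nat
  assumes sgG: "sg G"
    and maxd: "\<And>v. card (nb G v) \<le> d"
    and dc: "card (nb G c) = d"
    and s_def: "s = ex G P3"
begin

definition "A = nb G c"
definition "X = insert c A"
definition "T = {e\<in>G. e \<inter> X \<noteq> {}}"

lemma finG: "finite G" using sgG unfolding sg_def by blast
lemma finA: "finite A" unfolding A_def using nb_fin[OF sgG] .
lemma cA: "c \<notin> A" unfolding A_def using nb_irr[OF sgG] .
lemma cardA: "card A = d" unfolding A_def using dc .
lemma finnb: "finite (nb G v)" using nb_fin[OF sgG] .

lemma le_s: "F \<subseteq> G \<Longrightarrow> pf F \<Longrightarrow> card F \<le> s"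
  unfolding s_def using ex_ge finG by blast

lemma star_sub: "L \<subseteq> nb G x \<Longrightarrow> star x L \<subseteq> G"
  unfolding star_def nb_def by blast

lemma tri_sub: "{x,y} \<in> G \<Longrightarrow> {y,z} \<in> G \<Longrightarrow> {x,z} \<in> G \<Longrightarrow> tri x y z \<subseteq> G"
  unfolding tri_def by blast

lemma two_le_s:
  assumes "F1 \<subseteq> G" "F2 \<subseteq> G" "pf F1" "pf F2" "\<Union>F1 \<inter> \<Union>F2 = {}"
  shows "card F1 + card F2 \<le> s"
proof -
  have "card (F1 \<union> F2) = card F1 + card F2" using card_union_edges[OF sgG assms(1,2,5)] .
  moreover have "card (F1 \<union> F2) \<le> s" using le_s[of "F1 \<union> F2"] pf_union[OF assms(3,4,5)] assms(1,2) by blast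
  ultimately show ?thesis by simp
qed

lemma countT:
  "2 * card T = d + (\<Sum>a\<in>A. card (nb G a)) + (\<Sum>a\<in>A. card (nb G a - X))"
proof -
  have finX: "finite X" unfolding X_def using finA by simp
  define Tin where "Tin = {e\<in>G. e \<subseteq> X}"
  define Tout where "Tout = {e\<in>{e\<in>G. \<not> e \<subseteq> X}. e \<inter> X \<noteq> {}}"
  have dc1: "(\<Sum>v\<in>X. card {e\<in>G. v\<in>e \<and> True}) = (\<Sum>e\<in>{e\<in>G. True}. card (e \<inter> X))"
    by (rule double_count[OF finG finX])
  have l1: "(\<Sum>v\<in>X. card {e\<in>G. v\<in>e \<and> True}) = d + (\<Sum>a\<in>A. card (nb G a))"
  proof -
    have "(\<Sum>v\<in>X. card {e\<in>G. v\<in>e \<and> True}) = (\<Sum>v\<in>X. card (nb G v))"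
      by (rule sum.cong[OF refl]) (simp add: inc_card[OF sgG, of _ "\<lambda>_. True", simplified])
    also have "\<dots> = card (nb G c) + (\<Sum>a\<in>A. card (nb G a))"
      unfolding X_def using finA cA by simp
    finally show ?thesis using dc by simp
  qed
  have split: "(\<Sum>e\<in>G. card (e \<inter> X)) = (\<Sum>e\<in>Tin. card (e \<inter> X)) + (\<Sum>e\<in>{e\<in>G. \<not> e \<subseteq> X}. card (e \<inter> X))"
  proof -
    have eq: "G = Tin \<union> {e\<in>G. \<not> e \<subseteq> X}" unfolding Tin_def by blast
    have di: "Tin \<inter> {e\<in>G. \<not> e \<subseteq> X} = {}" unfolding Tin_def by blast
    have f1: "finite Tin" unfolding Tin_def using finG by auto
    have f2: "finite {e\<in>G. \<not> e \<subseteq> X}" using finG by auto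
    have "(\<Sum>e\<in>G. card (e \<inter> X)) = (\<Sum>e\<in>Tin \<union> {e\<in>G. \<not> e \<subseteq> X}. card (e \<inter> X))"
      by (rule sum.cong[OF eq refl])
    also have "\<dots> = (\<Sum>e\<in>Tin. card (e \<inter> X)) + (\<Sum>e\<in>{e\<in>G. \<not> e \<subseteq> X}. card (e \<inter> X))"
      by (rule sum.union_disjoint[OF f1 f2 di])
    finally show ?thesis .
  qed
  have tin: "(\<Sum>e\<in>Tin. card (e \<inter> X)) = 2 * card Tin"
  proof -
    have "(\<Sum>e\<in>Tin. card (e \<inter> X)) = (\<Sum>e\<in>Tin. 2)"
      by (rule sum.cong[OF refl]) (use card_inter_edge(1)[OF sgG] in \<open>auto simp: Tin_def\<close>)
    thus ?thesis by simp
  qed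
  have tout: "(\<Sum>e\<in>{e\<in>G. \<not> e \<subseteq> X}. card (e \<inter> X)) = card Tout"
  proof -
    have "(\<Sum>e\<in>{e\<in>G. \<not> e \<subseteq> X}. card (e \<inter> X)) = (\<Sum>e\<in>{e\<in>G. \<not> e \<subseteq> X}. if e \<inter> X \<noteq> {} then 1 else 0)"
      by (rule sum.cong[OF refl]) (use card_inter_edge(2)[OF sgG] in auto)
    also have "\<dots> = card Tout" unfolding Tout_def
      using sum.inter_filter[of "{e\<in>G. \<not> e \<subseteq> X}" "\<lambda>_. 1::nat" "\<lambda>e. e \<inter> X \<noteq> {}"] finG card_eq_sum
      by simp
    finally show ?thesis .
  qed
  have dc2: "(\<Sum>v\<in>X. card {e\<in>G. v\<in>e \<and> \<not> e \<subseteq> X}) = (\<Sum>e\<in>{e\<in>G. \<not> e \<subseteq> X}. card (e \<inter> X))"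
    by (rule double_count[OF finG finX])
  have l2: "(\<Sum>v\<in>X. card {e\<in>G. v\<in>e \<and> \<not> e \<subseteq> X}) = (\<Sum>a\<in>A. card (nb G a - X))"
  proof -
    have "(\<Sum>v\<in>X. card {e\<in>G. v\<in>e \<and> \<not> e \<subseteq> X}) = (\<Sum>v\<in>X. card (nb G v - X))"
    proof (rule sum.cong[OF refl])
      fix v assume v: "v \<in> X"
      have "card {e\<in>G. v\<in>e \<and> \<not> e \<subseteq> X} = card {u\<in>nb G v. \<not> {v,u} \<subseteq> X}"
        by (rule inc_card[OF sgG])
      also have "{u\<in>nb G v. \<not> {v,u} \<subseteq> X} = nb G v - X" using v by blast
      finally show "card {e\<in>G. v\<in>e \<and> \<not> e \<subseteq> X} = card (nb G v - X)" .
    qed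
    also have "\<dots> = card (nb G c - X) + (\<Sum>a\<in>A. card (nb G a - X))"
      unfolding X_def using finA cA by simp
    also have "nb G c - X = {}" unfolding X_def A_def by blast
    finally show ?thesis by simp
  qed
  have "T = Tin \<union> Tout"
  proof -
    have "e \<in> Tin \<Longrightarrow> e \<inter> X \<noteq> {}" for e
      using sg_edge[OF sgG, of e] unfolding Tin_def by blast
    thus ?thesis unfolding T_def Tin_def Tout_def by blast
  qed
  moreover have "Tin \<inter> Tout = {}" unfolding Tin_def Tout_def by blast
  moreover have "finite Tin" "finite Tout" unfolding Tin_def Tout_def using finG by auto
  ultimately have "card T = card Tin + card Tout" by (simp add: card_Un_disjoint)
  thus ?thesis using dc1 l1 split tin tout dc2 l2 by simp
qed

end

definition fS :: "nat \<Rightarrow> nat" where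
  "fS s = (Suc s choose 2) + (if s = 2 then 1 else 0)"

lemma two_choose: "2 * (Suc s choose 2) = s * Suc s"
  by (induction s) (simp_all add: numeral_2_eq_2)

lemma two_fS: "2 * fS s = s * Suc s + (if s = 2 then 2 else 0)"
  unfolding fS_def using two_choose[of s] by simp

lemma fS_mono: assumes "a \<le> b" shows "fS a \<le> fS b"
proof -
  have "a * Suc a \<le> b * Suc b" using assms by (intro mult_le_mono) auto
  moreover have "a = 2 \<Longrightarrow> b \<noteq> 2 \<Longrightarrow> 3 * Suc 3 \<le> b * Suc b" using assms
    by (intro mult_le_mono) auto
  ultimately have "2 * fS a \<le> 2 * fS b" unfolding two_fS by (cases "a = 2"; cases "b = 2") auto
  thus ?thesis by simp
qed

context kstep
begin

lemma d_le_s: "d \<le> s"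
proof -
  have "card (star c A) = d" using card_star[OF finA cA] cardA by simp
  moreover have "star c A \<subseteq> G" by (rule star_sub) (simp add: A_def)
  ultimately show ?thesis using le_s pf_star by metis
qed

lemma K1:
  assumes a: "a \<in> A"
  shows "card (nb G a - X) + (d - 1) \<le> s"
proof -
  have ac: "a \<noteq> c" using a cA by blast
  have s1: "star a (nb G a - X) \<subseteq> G" by (rule star_sub) blast
  have s2: "star c (A - {a}) \<subseteq> G" by (rule star_sub) (auto simp: A_def)
  have "\<Union>(star a (nb G a - X)) \<inter> \<Union>(star c (A - {a})) = {}"
  proof -
    have "insert a (nb G a - X) \<inter> insert c (A - {a}) = {}" using ac unfolding X_def by auto
    thus ?thesis using Union_star[of a "nb G a - X"] Union_star[of c "A - {a}"] by blast
  qed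
  hence "card (star a (nb G a - X)) + card (star c (A - {a})) \<le> s"
    using two_le_s[OF s1 s2 pf_star pf_star] by blast
  moreover have "card (star a (nb G a - X)) = card (nb G a - X)"
    by (rule card_star) (use finnb nb_irr[OF sgG] in auto)
  moreover have "card (star c (A - {a})) = d - 1"
    using card_star[of "A - {a}" c] finA cA cardA a by simp
  ultimately show ?thesis by simp
qed

lemma cross_le: assumes a: "a \<in> A" shows "card (nb G a - X) \<le> d - 1"
proof -
  have "c \<in> nb G a" using a nb_sym unfolding A_def by metis
  hence "nb G a - X \<subseteq> nb G a - {c}" unfolding X_def by blast
  hence "card (nb G a - X) \<le> card (nb G a - {c})" by (intro card_mono) (use finnb in auto)
  also have "\<dots> = card (nb G a) - 1" using \<open>c \<in> nb G a\<close> finnb by simp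
  also have "\<dots> \<le> d - 1" using maxd[of a] by simp
  finally show ?thesis .
qed

lemma SA_le: "(\<Sum>a\<in>A. card (nb G a)) \<le> d * d"
proof -
  have "(\<Sum>a\<in>A. card (nb G a)) \<le> (\<Sum>a\<in>A. d)" by (rule sum_mono) (rule maxd)
  thus ?thesis using cardA by simp
qed

definition "Mn a = A - {a} - nb G a"
definition "Cr a = nb G a - X"

lemma Mn_sym: "x \<in> A \<Longrightarrow> y \<in> A \<Longrightarrow> x \<in> Mn y \<longleftrightarrow> y \<in> Mn x"
  unfolding Mn_def using nb_sym[of x G y] by auto

lemma finMn: "finite (Mn a)" unfolding Mn_def using finA by simp
lemma finCr: "finite (Cr a)" unfolding Cr_def using finnb by simp

lemma c_nb: "a \<in> A \<Longrightarrow> c \<in> nb G a"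
  using nb_sym[of c G a] unfolding A_def by simp

lemma na_Mn: assumes a: "a \<in> A" shows "card (nb G a \<inter> A) + card (Mn a) = d - 1"
proof -
  have "nb G a \<inter> A \<subseteq> A - {a}" using nb_irr[OF sgG] by blast
  moreover have "Mn a = (A - {a}) - (nb G a \<inter> A)" unfolding Mn_def by blast
  ultimately have "card (Mn a) = card (A - {a}) - card (nb G a \<inter> A)"
    using finA by (simp add: card_Diff_subset finite_subset)
  moreover have "card (nb G a \<inter> A) \<le> card (A - {a})"
    using \<open>nb G a \<inter> A \<subseteq> A - {a}\<close> finA by (intro card_mono) auto
  moreover have "card (A - {a}) = d - 1" using a finA cardA by simp
  ultimately show ?thesis by simp
qed

lemma deg_split: assumes a: "a \<in> A" shows "card (nb G a) = 1 + card (nb G a \<inter> A) + card (Cr a)"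
proof -
  define S where "S = nb G a \<inter> A"
  have eq: "nb G a = insert c (S \<union> Cr a)" using c_nb[OF a] unfolding S_def Cr_def X_def by blast
  have ni: "c \<notin> S \<union> Cr a" using cA unfolding S_def Cr_def X_def by blast
  have di: "S \<inter> Cr a = {}" unfolding S_def Cr_def X_def by blast
  have fS: "finite S" unfolding S_def using finA by simp
  have "card (nb G a) = card (insert c (S \<union> Cr a))" using eq by (rule arg_cong)
  also have "\<dots> = Suc (card (S \<union> Cr a))" using ni fS finCr by simp
  also have "card (S \<union> Cr a) = card S + card (Cr a)" by (rule card_Un_disjoint[OF fS finCr di])
  finally show ?thesis unfolding S_def by simp
qed

lemma K2:
  assumes x1: "x1 \<in> A" and x2: "x2 \<in> A" and ne: "x1 \<noteq> x2" and adj: "x2 \<in> nb G x1"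
    and w1: "w \<in> Cr x1" and w2: "w \<in> Cr x2"
  shows "d + 1 \<le> s"
proof -
  have wX: "w \<notin> X" using w1 unfolding Cr_def by blast
  have F1: "tri x1 x2 w \<subseteq> G"
    by (rule tri_sub) (use adj w1 w2 in \<open>auto simp: nb_def Cr_def\<close>)
  have F2: "star c (A - {x1,x2}) \<subseteq> G" by (rule star_sub) (auto simp: A_def)
  have "{x1,x2,w} \<inter> insert c (A - {x1,x2}) = {}" using wX x1 x2 cA unfolding X_def by auto
  hence disj: "\<Union>(tri x1 x2 w) \<inter> \<Union>(star c (A - {x1,x2})) = {}"
    using Union_tri[of x1 x2 w] Union_star[of c "A - {x1,x2}"] by blast
  have "card (tri x1 x2 w) + card (star c (A - {x1,x2})) \<le> s"
    by (rule two_le_s[OF F1 F2 pf_tri pf_star disj])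
  moreover have "card (tri x1 x2 w) = 3" using ne wX x1 x2 unfolding X_def by (intro card_tri) auto
  moreover have "card (star c (A - {x1,x2})) = d - 2"
    using card_star[of "A - {x1,x2}" c] finA cA cardA x1 x2 ne by simp
  moreover have "2 \<le> d"
  proof -
    have "{x1,x2} \<subseteq> A" using x1 x2 by blast
    hence "card {x1,x2} \<le> card A" using finA by (intro card_mono) auto
    thus ?thesis using ne cardA by simp
  qed
  ultimately show ?thesis by simp
qed

lemma K3:
  assumes x: "x \<in> A" and Cx: "Cr x = {w}" and Mx: "Mn x = {z}" and w': "w' \<in> Cr z" "w' \<noteq> w"
  shows "d + 1 \<le> s"
proof -
  have z: "z \<in> A" "z \<noteq> x" "z \<notin> nb G x" using Mx unfolding Mn_def by blast+
  have wX: "w \<notin> X" "w \<in> nb G x" using Cx unfolding Cr_def by blast+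
  have w'X: "w' \<notin> X" "w' \<in> nb G z" using w' unfolding Cr_def by blast+
  define L where "L = insert c (insert w (A - {x,z}))"
  have Lnb: "L \<subseteq> nb G x"
  proof
    fix u assume "u \<in> L"
    moreover have "u \<in> A - {x,z} \<Longrightarrow> u \<in> nb G x" using Mx unfolding Mn_def by blast
    ultimately show "u \<in> nb G x" unfolding L_def using c_nb[OF x] wX by blast
  qed
  have F1: "star x L \<subseteq> G" by (rule star_sub[OF Lnb])
  have F2: "star z {w'} \<subseteq> G" by (rule star_sub) (use w'X in auto)
  have "insert x L \<inter> insert z {w'} = {}"
    using z wX w'X w'(2) cA x unfolding L_def X_def by auto
  hence disj: "\<Union>(star x L) \<inter> \<Union>(star z {w'}) = {}"
    using Union_star[of x L] Union_star[of z "{w'}"] by blast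
  have "card (star x L) + card (star z {w'}) \<le> s"
    by (rule two_le_s[OF F1 F2 pf_star pf_star disj])
  moreover have "card (star z {w'}) = 1" using w'X z unfolding X_def by (subst card_star) auto
  moreover have "card (star x L) = d"
  proof -
    have xL: "x \<notin> L" using wX cA x unfolding L_def X_def by auto
    have "card L = d"
    proof -
      have "c \<notin> insert w (A - {x,z})" using wX cA unfolding X_def by auto
      moreover have "w \<notin> A - {x,z}" using wX unfolding X_def by auto
      moreover have "card (A - {x,z}) = d - 2" using finA cardA x z by simp
      moreover have "2 \<le> d"
      proof -
        have "{x,z} \<subseteq> A" using x z by blast
        hence "card {x,z} \<le> card A" using finA by (intro card_mono) auto
        thus ?thesis using z cardA by simp
      qed
      ultimately show ?thesis unfolding L_def using finA by simp
    qed
    moreover have "finite L" unfolding L_def using finA by simp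
    ultimately show ?thesis using card_star xL by metis
  qed
  ultimately show ?thesis by simp
qed

lemma K4:
  assumes x: "x \<in> A" and Cx: "Cr x = {w}" and Mx: "Mn x = {z}" and Cz: "Cr z = {w}"
    and mz: "card (Mn z) \<le> 2" and d3: "3 \<le> d"
  shows "d + 1 \<le> s"
proof -
  have z: "z \<in> A" "z \<noteq> x" "z \<notin> nb G x" using Mx unfolding Mn_def by blast+
  have xMz: "x \<in> Mn z" using Mn_sym[OF x z(1)] Mx by blast
  have xz: "x \<notin> nb G z" using z(3) nb_sym by metis
  have wX: "w \<notin> X" "w \<in> nb G x" "w \<in> nb G z" using Cx Cz unfolding Cr_def by blast+
  have Anb: "u \<in> A - {x,z} \<Longrightarrow> u \<in> nb G x" for u using Mx unfolding Mn_def by blast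
  obtain e where e: "e \<in> A" "e \<noteq> x" "e \<noteq> z" and e2: "card (Mn z) = 2 \<Longrightarrow> e \<notin> nb G z"
  proof (cases "card (Mn z) = 2")
    case True
    then obtain p q where pq: "p \<noteq> q" "Mn z = {p,q}" by (meson card_2_iff)
    hence "\<exists>e. e \<in> Mn z \<and> e \<noteq> x" by auto
    then obtain e where "e \<in> Mn z" "e \<noteq> x" by blast
    thus ?thesis using that unfolding Mn_def by blast
  next
    case False
    have "card (A - {x,z}) = d - 2" using finA cardA x z by simp
    hence "card (A - {x,z}) \<noteq> 0" using d3 by simp
    hence "A - {x,z} \<noteq> {}" by (metis card.empty)
    then obtain e where "e \<in> A - {x,z}" by blast
    thus ?thesis using that False by blast
  qed
  define L where "L = insert w ((nb G z \<inter> A) - {e})"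
  have F1: "tri c x e \<subseteq> G"
  proof (rule tri_sub)
    show "{c,x} \<in> G" using x unfolding A_def nb_def by blast
    show "{x,e} \<in> G" using Anb[of e] e unfolding nb_def by blast
    show "{c,e} \<in> G" using e unfolding A_def nb_def by blast
  qed
  have F2: "star z L \<subseteq> G" by (rule star_sub) (use wX in \<open>auto simp: L_def\<close>)
  have "{c,x,e} \<inter> insert z L = {}"
    using z e wX cA xz x unfolding L_def X_def by auto
  hence disj: "\<Union>(tri c x e) \<inter> \<Union>(star z L) = {}"
    using Union_tri[of c x e] Union_star[of z L] by blast
  have "card (tri c x e) + card (star z L) \<le> s"
    by (rule two_le_s[OF F1 F2 pf_tri pf_star disj])
  moreover have "card (tri c x e) = 3" using x e cA by (intro card_tri) auto
  moreover have "d - 2 \<le> card (star z L)"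
  proof -
    have zL: "z \<notin> L" using wX nb_irr[OF sgG, of z] z unfolding L_def X_def by auto
    have finL: "finite L" unfolding L_def using finA by simp
    have "card (Mn z) \<ge> 1" using xMz finMn by (metis One_nat_def Suc_leI card_gt_0_iff empty_iff)
    have na: "card (nb G z \<inter> A) + card (Mn z) = d - 1" by (rule na_Mn[OF z(1)])
    have "d - 3 \<le> card ((nb G z \<inter> A) - {e})"
    proof (cases "e \<in> nb G z")
      case True
      hence "card (Mn z) \<noteq> 2" using e2 by blast
      hence "card (Mn z) = 1" using mz \<open>card (Mn z) \<ge> 1\<close> by simp
      thus ?thesis using na True e finA by simp
    next
      case False
      hence "(nb G z \<inter> A) - {e} = nb G z \<inter> A" by blast
      thus ?thesis using na mz by simp
    qed
    moreover have "w \<notin> (nb G z \<inter> A) - {e}" using wX unfolding X_def by blast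
    ultimately have "d - 2 \<le> card L" unfolding L_def using finA d3 by simp
    thus ?thesis using card_star[OF finL zL] by simp
  qed
  ultimately show ?thesis using d3 by simp
qed

lemma rel_swap:
  assumes "finite B" "finite C"
  shows "(\<Sum>y\<in>B. card {x\<in>C. R x y}) = (\<Sum>x\<in>C. card {y\<in>B. R x y})"
proof -
  have "(\<Sum>y\<in>B. card {x\<in>C. R x y}) = (\<Sum>y\<in>B. \<Sum>x\<in>C. if R x y then 1 else 0)"
    by (rule sum.cong[OF refl]) (use sum.inter_filter[of C "\<lambda>_. 1::nat"] assms card_eq_sum in simp)
  also have "\<dots> = (\<Sum>x\<in>C. \<Sum>y\<in>B. if R x y then 1 else 0)" by (rule sum.swap)
  also have "\<dots> = (\<Sum>x\<in>C. card {y\<in>B. R x y})"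
    by (rule sum.cong[OF refl]) (use sum.inter_filter[of B "\<lambda>_. 1::nat"] assms card_eq_sum in simp)
  finally show ?thesis .
qed

lemma charging:
  assumes sd: "s = d" and d3: "3 \<le> d"
  shows "(\<Sum>a\<in>A. card (nb G a)) + (\<Sum>a\<in>A. card (nb G a - X)) \<le> d * d"
proof -
  have ca1: "card (Cr a) \<le> 1" if "a \<in> A" for a using K1[OF that] sd d3 unfolding Cr_def by simp
  define Tt where "Tt = {x\<in>A. card (Cr x) = 1 \<and> card (Mn x) = 1}"
  define tau where "tau y = card {x\<in>Tt. x \<in> Mn y}" for y
  have finTt: "finite Tt" unfolding Tt_def using finA by simp
  have one: "\<exists>u. S = {u}" if h1: "card S = 1" for S :: "'a set"
  proof -
    obtain u where "S = {u}" by (rule card_1_singletonE[OF h1])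
    thus ?thesis by blast
  qed
  have claim: "2 * card (Cr y) + tau y \<le> card (Mn y) + (if y \<in> Tt then 1 else 0)" if y: "y \<in> A" for y
  proof (cases "card (Cr y) = 0")
    case True
    have "tau y \<le> card (Mn y)" unfolding tau_def by (rule card_mono[OF finMn]) blast
    thus ?thesis using True by simp
  next
    case False
    hence c1: "card (Cr y) = 1" using ca1[OF y] by simp
    then obtain w where Cy: "Cr y = {w}" using one by blast
    have my1: "card (Mn y) \<ge> 1"
    proof -
      have "card (nb G y) = 2 + card (nb G y \<inter> A)" using deg_split[OF y] c1 by simp
      hence "card (nb G y \<inter> A) \<le> d - 2" using maxd[of y] by simp
      thus ?thesis using na_Mn[OF y] d3 by simp
    qed
    show ?thesis
    proof (cases "tau y = 0")
      case True
      show ?thesis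
      proof (cases "y \<in> Tt")
        case True thus ?thesis using c1 \<open>tau y = 0\<close> unfolding Tt_def by simp
      next
        case False
        hence "card (Mn y) \<noteq> 1" using c1 y unfolding Tt_def by blast
        thus ?thesis using my1 c1 True by simp
      qed
    next
      case False
      have "{x\<in>Tt. x \<in> Mn y} \<noteq> {}" using False unfolding tau_def by (intro notI) simp
      then obtain x where xT: "x \<in> Tt" and xM: "x \<in> Mn y" by blast
      have x: "x \<in> A" using xT unfolding Tt_def by blast
      have prp: "Cr xx = {w} \<and> Mn xx = {y}" if "xx \<in> Tt" "xx \<in> Mn y" for xx
      proof -
        have xx: "xx \<in> A" "card (Cr xx) = 1" "card (Mn xx) = 1" using that(1) unfolding Tt_def by blast+
        obtain z where Mxx: "Mn xx = {z}" using one xx(3) by blast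
        have "y \<in> Mn xx" using Mn_sym[OF xx(1) y] that(2) by blast
        hence Mxx': "Mn xx = {y}" using Mxx by auto
        obtain w' where Cxx: "Cr xx = {w'}" using one xx(2) by blast
        have "w = w'"
        proof (rule ccontr)
          assume "w \<noteq> w'"
          hence "d + 1 \<le> s" using K3[OF xx(1) Cxx Mxx', of w] Cy by blast
          thus False using sd by simp
        qed
        thus ?thesis using Cxx Mxx' by blast
      qed
      have Cx: "Cr x = {w}" and Mx: "Mn x = {y}" using prp[OF xT xM] by blast+
      have my3: "card (Mn y) \<ge> 3"
      proof (rule ccontr)
        assume "\<not> 3 \<le> card (Mn y)"
        hence "d + 1 \<le> s" using K4[OF x Cx Mx Cy _ d3] by simp
        thus False using sd by simp
      qed
      have yT: "y \<notin> Tt" using my3 unfolding Tt_def by simp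
      have t1: "tau y \<le> 1"
      proof -
        have "\<forall>x1\<in>{x\<in>Tt. x \<in> Mn y}. \<forall>x2\<in>{x\<in>Tt. x \<in> Mn y}. x1 = x2"
        proof (intro ballI, rule ccontr)
          fix x1 x2 assume h: "x1 \<in> {x\<in>Tt. x \<in> Mn y}" "x2 \<in> {x\<in>Tt. x \<in> Mn y}" "x1 \<noteq> x2"
          have p1: "Cr x1 = {w}" "Mn x1 = {y}" using prp h(1) by blast+
          have p2: "Cr x2 = {w}" "Mn x2 = {y}" using prp h(2) by blast+
          have a1: "x1 \<in> A" "x2 \<in> A" using h unfolding Tt_def by blast+
          have "x2 \<noteq> y" using h(2) unfolding Mn_def by blast
          hence "x2 \<notin> Mn x1" using p1 by blast
          hence "x2 \<in> nb G x1" using a1 h(3) unfolding Mn_def by blast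
          hence "d + 1 \<le> s" using K2[OF a1 h(3)] p1 p2 by blast
          thus False using sd by simp
        qed
        moreover have "finite {x\<in>Tt. x \<in> Mn y}" using finTt by simp
        ultimately have "card {x\<in>Tt. x \<in> Mn y} \<le> Suc 0" using card_le_Suc0_iff_eq by blast
        thus ?thesis unfolding tau_def by simp
      qed
      show ?thesis using t1 my3 c1 yT by simp
    qed
  qed
  have sum1: "(\<Sum>y\<in>A. 2 * card (Cr y) + tau y) \<le> (\<Sum>y\<in>A. card (Mn y) + (if y \<in> Tt then 1 else 0))"
    by (rule sum_mono) (rule claim)
  have tausum: "(\<Sum>y\<in>A. tau y) = card Tt"
  proof -
    have "(\<Sum>y\<in>A. tau y) = (\<Sum>x\<in>Tt. card {y\<in>A. x \<in> Mn y})"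
      unfolding tau_def by (rule rel_swap[OF finA finTt])
    also have "\<dots> = (\<Sum>x\<in>Tt. 1)"
    proof (rule sum.cong[OF refl])
      fix x assume xT: "x \<in> Tt"
      hence x: "x \<in> A" "card (Mn x) = 1" unfolding Tt_def by blast+
      have "Mn x \<subseteq> A" unfolding Mn_def by blast
      hence "{y\<in>A. x \<in> Mn y} = Mn x" using Mn_sym[OF x(1)] by blast
      thus "card {y\<in>A. x \<in> Mn y} = 1" using x by simp
    qed
    finally show ?thesis by simp
  qed
  have Ttsum: "(\<Sum>y\<in>A. (if y \<in> Tt then 1 else 0::nat)) = card Tt"
  proof -
    have "Tt \<subseteq> A" unfolding Tt_def by blast
    hence "{y\<in>A. y \<in> Tt} = Tt" by blast
    thus ?thesis using sum.inter_filter[of A "\<lambda>_. 1::nat" "\<lambda>y. y \<in> Tt"] finA card_eq_sum by simp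
  qed
  have main: "(\<Sum>y\<in>A. 2 * card (Cr y)) \<le> (\<Sum>y\<in>A. card (Mn y))"
    using sum1 tausum Ttsum by (simp add: sum.distrib)
  have "(\<Sum>a\<in>A. card (nb G a) + card (Cr a)) \<le> (\<Sum>a\<in>A. d)"
  proof -
    have eq: "card (nb G a) + card (Cr a) + card (Mn a) = d + 2 * card (Cr a)" if a: "a \<in> A" for a
      using deg_split[OF a] na_Mn[OF a] d3 by simp
    have "(\<Sum>a\<in>A. card (nb G a) + card (Cr a)) + (\<Sum>a\<in>A. card (Mn a)) = (\<Sum>a\<in>A. card (nb G a) + card (Cr a) + card (Mn a))"
      by (simp add: sum.distrib)
    also have "\<dots> = (\<Sum>a\<in>A. d + 2 * card (Cr a))" by (rule sum.cong[OF refl]) (rule eq)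
    also have "\<dots> = (\<Sum>a\<in>A. d) + (\<Sum>a\<in>A. 2 * card (Cr a))" by (rule sum.distrib)
    finally have "(\<Sum>a\<in>A. card (nb G a) + card (Cr a)) + (\<Sum>a\<in>A. card (Mn a)) = (\<Sum>a\<in>A. d) + (\<Sum>a\<in>A. 2 * card (Cr a))" .
    thus ?thesis using main by simp
  qed
  thus ?thesis using cardA unfolding Cr_def by (simp add: sum.distrib)
qed

lemma key:
  assumes d1: "1 \<le> d"
  shows "card T + fS (s - d) \<le> fS s"
proof -
  define SA where "SA = (\<Sum>a\<in>A. card (nb G a))"
  define cr where "cr = (\<Sum>a\<in>A. card (nb G a - X))"
  have cT: "2 * card T = d + SA + cr" unfolding SA_def cr_def by (rule countT)
  have SA: "SA \<le> d * d" unfolding SA_def by (rule SA_le)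
  have cr1: "cr \<le> d * (d - 1)"
  proof -
    have "cr \<le> (\<Sum>a\<in>A. d - 1)" unfolding cr_def by (rule sum_mono) (rule cross_le)
    thus ?thesis using cardA by simp
  qed
  define t where "t = s - d"
  have sdt: "s = d + t" unfolding t_def using d_le_s by simp
  show ?thesis
  proof (cases "t = 0")
    case False
    have cr2: "cr \<le> d * (t + 1)"
    proof -
      have "cr \<le> (\<Sum>a\<in>A. t + 1)" unfolding cr_def
        by (rule sum_mono) (use K1 sdt d1 in fastforce)
      thus ?thesis using cardA by simp
    qed
    have dt: "d \<le> d * t" using False by simp
    have exp: "(d + t) * Suc (d + t) = d * d + 2 * (d * t) + d + t * Suc t"
      by (simp add: algebra_simps)
    have e2: "d * (t + 1) = d * t + d" by (simp add: algebra_simps)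
    have main: "SA + cr + (if t = 2 then 2 else 0) \<le> d * d + 2 * (d * t) + (if s = 2 then 2 else 0)"
    proof (cases "t = 2")
      case True
      show ?thesis
      proof (cases "d = 1")
        case True
        thus ?thesis using cr1 SA \<open>t = 2\<close> by simp
      next
        case False
        hence "2 \<le> d" using d1 by simp
        thus ?thesis using cr2 e2 SA \<open>t = 2\<close> by simp
      qed
    next
      case False
      have "SA + cr \<le> d * d + 2 * (d * t)" using cr2 e2 SA dt by linarith
      thus ?thesis using False by simp
    qed
    have "2 * (card T + fS (s - d)) \<le> 2 * fS s"
      using cT main exp two_fS[of s] two_fS[of t] unfolding t_def[symmetric] sdt by simp
    thus ?thesis by simp
  next
    case True
    hence sd: "s = d" using sdt by simp
    have "SA + cr \<le> d * d + (if d = 2 then 2 else 0)"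
    proof (cases "3 \<le> d")
      case True
      thus ?thesis using charging[OF sd True] unfolding SA_def cr_def by simp
    next
      case False
      hence "d = 1 \<or> d = 2" using d1 by auto
      thus ?thesis using SA cr1 by auto
    qed
    moreover have "fS 0 = 0" unfolding fS_def by (simp add: binomial_eq_0)
    ultimately have "2 * card T + 2 * fS 0 \<le> 2 * fS s" using cT two_fS[of s] sd by simp
    thus ?thesis using True unfolding t_def by simp
  qed
qed

end

lemma main_bound: "sg G \<Longrightarrow> card G \<le> fS (ex G P3)"
proof (induction "card G" arbitrary: G rule: less_induct)
  case less
  note sgG = less.prems
  show ?case
  proof (cases "G = {}")
    case True thus ?thesis by simp
  next
    case False
    then obtain e0 where e0: "e0 \<in> G" by blast
    then obtain a0 b0 where "a0 \<noteq> b0" "e0 = {a0,b0}" using sg_edge[OF sgG] by blast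
    define V where "V = \<Union>G"
    have finV: "finite V" unfolding V_def by (rule sg_fin_U[OF sgG])
    have neV: "V \<noteq> {}" unfolding V_def using e0 \<open>e0 = {a0,b0}\<close> by blast
    define d where "d = Max ((\<lambda>v. card (nb G v)) ` V)"
    have "d \<in> (\<lambda>v. card (nb G v)) ` V" unfolding d_def using finV neV by simp
    then obtain c where cV: "c \<in> V" and dc: "card (nb G c) = d" by blast
    have maxd: "card (nb G v) \<le> d" for v
    proof (cases "v \<in> V")
      case True thus ?thesis unfolding d_def using finV by simp
    next
      case False
      hence "nb G v = {}" unfolding V_def nb_def by blast
      thus ?thesis by simp
    qed
    interpret k: kstep G c d "ex G P3"
      by unfold_locales (use sgG maxd dc in auto)
    have d1: "1 \<le> d"
    proof -
      obtain e where "e \<in> G" "c \<in> e" using cV unfolding V_def by blast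
      then obtain u where "e = {c,u}" using sg_edge[OF sgG] by blast
      hence "u \<in> nb G c" using \<open>e\<in>G\<close> unfolding nb_def by simp
      hence "nb G c \<noteq> {}" by blast
      hence "card (nb G c) > 0" using k.finnb[of c] by (simp add: card_gt_0_iff)
      thus ?thesis using dc by simp
    qed
    define G' where "G' = {e\<in>G. e \<inter> k.X = {}}"
    have sgG': "sg G'" using sgG unfolding sg_def G'_def by auto
    have TG: "k.T = G - G'" unfolding k.T_def G'_def by blast
    have cG: "card G = card G' + card k.T"
    proof -
      have "G = G' \<union> k.T" "G' \<inter> k.T = {}" unfolding TG G'_def by blast+
      moreover have "finite G'" "finite k.T" using k.finG unfolding G'_def k.T_def by auto
      ultimately show ?thesis by (metis card_Un_disjoint)
    qed
    have "k.T \<noteq> {}"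
    proof -
      obtain e where "e \<in> G" "c \<in> e" using cV unfolding V_def by blast
      hence "e \<in> k.T" unfolding k.T_def k.X_def by blast
      thus ?thesis by blast
    qed
    hence "card k.T > 0" using k.finG unfolding k.T_def by (simp add: card_gt_0_iff)
    hence lt: "card G' < card G" using cG by simp
    have IH: "card G' \<le> fS (ex G' P3)" using less.hyps[OF lt sgG'] .
    have exG': "ex G' P3 + d \<le> ex G P3"
    proof -
      obtain F where F: "F \<subseteq> G'" "pf F" "card F = ex G' P3"
        using ex_attained[of G'] sgG' unfolding sg_def by blast
      have s2: "star c k.A \<subseteq> G" by (rule k.star_sub) (simp add: k.A_def)
      have "\<Union>F \<inter> \<Union>(star c k.A) = {}"
      proof -
        have "\<Union>F \<inter> k.X = {}" using F(1) unfolding G'_def by blast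
        moreover have "\<Union>(star c k.A) \<subseteq> k.X" using Union_star[of c k.A] unfolding k.X_def .
        ultimately show ?thesis by blast
      qed
      note disj = this
      have FG: "F \<subseteq> G" using F(1) unfolding G'_def by blast
      have "card F + card (star c k.A) \<le> ex G P3"
        by (rule k.two_le_s[OF FG s2 F(2) pf_star disj])
      moreover have "card (star c k.A) = d" using card_star[OF k.finA k.cA] k.cardA by simp
      ultimately show ?thesis using F(3) by simp
    qed
    have "fS (ex G' P3) \<le> fS (ex G P3 - d)" by (rule fS_mono) (use exG' in simp)
    thus ?thesis using cG IH k.key[OF d1] by simp
  qed
qed

lemma part1:
  fixes k :: nat
  assumes "k \<ge> 1" "simple_graph (G :: 'a set set)" "ex G P3 < k"
  shows "num_edges G \<le> (k choose 2) + (if k = 3 then 1 else 0)"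
proof -
  have sgG: "sg G" using assms(2) unfolding sg_def simple_graph_def .
  have "card G \<le> fS (ex G P3)" by (rule main_bound[OF sgG])
  also have "\<dots> \<le> fS (k - 1)" by (rule fS_mono) (use assms in simp)
  also have "\<dots> = (k choose 2) + (if k = 3 then 1 else 0)"
    unfolding fS_def using assms(1) by (cases k) auto
  finally show ?thesis unfolding num_edges_def .
qed


definition Cor :: "nat \<Rightarrow> nat set set" where
  "Cor n = {S. S \<subseteq> {..<n} \<and> card S = 2} \<union> (\<lambda>i. {i, n+i}) ` {..<n}"

lemma Cor_sg: "sg (Cor n)"
proof -
  have "finite {S. S \<subseteq> {..<n} \<and> card S = 2}"
    by (rule finite_subset[of _ "Pow {..<n}"]) auto
  thus ?thesis unfolding sg_def Cor_def by auto
qed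

lemma Cor_card: "card (Cor n) = (n choose 2) + n"
proof -
  have f1: "finite {S. S \<subseteq> {..<n} \<and> card S = 2}"
    by (rule finite_subset[of _ "Pow {..<n}"]) auto
  have c1: "card {S. S \<subseteq> {..<n} \<and> card S = 2} = n choose 2"
    using n_subsets[of "{..<n}" 2] by simp
  have c2: "card ((\<lambda>i. {i, n+i}) ` {..<n}) = n"
    by (subst card_image) (auto simp: inj_on_def doubleton_eq_iff)
  have di: "{S. S \<subseteq> {..<n} \<and> card S = 2} \<inter> (\<lambda>i. {i, n+i}) ` {..<n} = {}" by auto
  show ?thesis unfolding Cor_def using card_Un_disjoint[OF f1 _ di] c1 c2 by simp
qed

lemma Cor_high: assumes "{u, w} \<in> Cor n" "n \<le> u" shows "w + n = u"
  using assms unfolding Cor_def by (auto simp: doubleton_eq_iff)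

lemma Cor_pend: "i < n \<Longrightarrow> {i, n+i} \<in> Cor n"
  unfolding Cor_def by auto

lemma Cor_edge_cases:
  assumes "e \<in> Cor n"
  shows "(\<exists>i<n. e = {i, n+i}) \<or> (\<exists>a b. a < n \<and> b < n \<and> a \<noteq> b \<and> e = {a,b})"
proof (cases "\<exists>i<n. e = {i, n+i}")
  case False
  hence "e \<subseteq> {..<n}" "card e = 2" using assms unfolding Cor_def by auto
  then obtain a b where "a \<noteq> b" "e = {a,b}" by (meson card_2_iff)
  thus ?thesis using \<open>e \<subseteq> {..<n}\<close> by auto
qed simp

lemma edge_other: assumes "sg G" "e \<in> G" "a \<in> e" shows "\<exists>u. u \<noteq> a \<and> e = {a,u}"
proof -
  obtain p q where pq: "p \<noteq> q" "e = {p,q}" using sg_edge[OF assms(1,2)] by blast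
  show ?thesis
  proof (cases "a = p")
    case True thus ?thesis using pq by auto
  next
    case False
    hence "a = q" using pq assms(3) by blast
    thus ?thesis using pq by (auto simp: insert_commute)
  qed
qed

definition own :: "nat set set \<Rightarrow> nat \<Rightarrow> nat \<Rightarrow> nat set \<Rightarrow> bool" where
  "own F n x e \<longleftrightarrow> e \<in> F \<and> ((x \<in> e \<and> (\<forall>e'\<in>F. x \<in> e' \<longrightarrow> e' = e)) \<or> e = {x, n+x}
     \<or> (x \<notin> e \<and> (\<forall>y\<in>e. {x,y} \<in> F)))"

lemma own_exists:
  assumes F: "F \<subseteq> Cor n" "pf F" and e: "e \<in> F"
  shows "\<exists>x<n. own F n x e"
proof -
  have eC: "e \<in> Cor n" using F e by blast
  show ?thesis
  proof (cases "\<exists>i<n. e = {i, n+i}")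
    case True
    then obtain i where "i < n" "e = {i, n+i}" by blast
    thus ?thesis using e unfolding own_def by blast
  next
    case False
    then obtain a b where ab: "a < n" "b < n" "a \<noteq> b" "e = {a,b}" using Cor_edge_cases[OF eC] by blast
    show ?thesis
    proof (cases "\<forall>e'\<in>F. a \<in> e' \<longrightarrow> e' = e")
      case True thus ?thesis using ab e unfolding own_def by blast
    next
      case False
      then obtain e1 where e1: "e1 \<in> F" "a \<in> e1" "e1 \<noteq> e" by blast
      show ?thesis
      proof (cases "\<forall>e'\<in>F. b \<in> e' \<longrightarrow> e' = e")
        case True thus ?thesis using ab e unfolding own_def by blast
      next
        case False
        then obtain e2 where e2: "e2 \<in> F" "b \<in> e2" "e2 \<noteq> e" by blast
        have "e1 \<in> Cor n" "e2 \<in> Cor n" using e1 e2 F by blast+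
        obtain u where u: "e1 = {a,u}" "u \<noteq> a" using edge_other[OF Cor_sg \<open>e1 \<in> Cor n\<close> e1(2)] by blast
        obtain v where v: "e2 = {b,v}" "v \<noteq> b" using edge_other[OF Cor_sg \<open>e2 \<in> Cor n\<close> e2(2)] by blast
        have ub: "u \<noteq> b" using u e1 ab by auto
        have va: "v \<noteq> a" using v e2 ab by (auto simp: insert_commute)
        have uv: "u = v"
        proof (rule ccontr)
          assume "u \<noteq> v"
          have "{u,a} \<in> F" "{a,b} \<in> F" "{b,v} \<in> F" using u v e1 e2 e ab by (auto simp: insert_commute)
          thus False using F(2) \<open>u \<noteq> v\<close> u(2) ub v(2) va ab(3) unfolding pf_def by blast
        qed
        have Fa: "{u,a} \<in> F" "{u,b} \<in> F" using u v uv e1 e2 by (auto simp: insert_commute)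
        have un: "u < n"
        proof (rule ccontr)
          assume "\<not> u < n"
          hence "a + n = u" "b + n = u" using Cor_high[of u a n] Cor_high[of u b n] Fa F(1) by auto
          thus False using ab by simp
        qed
        have "u \<notin> e" using ab u ub by auto
        moreover have "\<forall>y\<in>e. {u,y} \<in> F" using Fa ab by auto
        ultimately show ?thesis using un e unfolding own_def by blast
      qed
    qed
  qed
qed

lemma not_pf: "pf F \<Longrightarrow> {a,b}\<in>F \<Longrightarrow> {b,c}\<in>F \<Longrightarrow> {c,d}\<in>F \<Longrightarrow> a\<noteq>b \<Longrightarrow> a\<noteq>c \<Longrightarrow> a\<noteq>d
  \<Longrightarrow> b\<noteq>c \<Longrightarrow> b\<noteq>d \<Longrightarrow> c\<noteq>d \<Longrightarrow> False"
  unfolding pf_def by blast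

lemma own_unique:
  assumes F: "F \<subseteq> Cor n" "pf F" and x: "x < n" and o1: "own F n x e1" and o2: "own F n x e2"
  shows "e1 = e2"
proof -
  have sg: "sg (Cor n)" by (rule Cor_sg)
  have two: "\<exists>p q. p \<noteq> q \<and> e = {p,q}" if "e \<in> F" for e using sg_edge[OF sg] F(1) that by blast
  define P1 where "P1 e = (x \<in> e \<and> (\<forall>e'\<in>F. x \<in> e' \<longrightarrow> e' = e))" for e
  define P3 where "P3 e = (x \<notin> e \<and> (\<forall>y\<in>e. {x,y} \<in> F))" for e
  have R3R1: "e = e'" if h1: "P1 e" and h2: "P3 e'" and ine: "e \<in> F" "e' \<in> F" for e e'
  proof -
    obtain p q where pq: "p \<noteq> q" "e' = {p,q}" using two ine(2) by blast
    have h2': "\<forall>y\<in>e'. {x,y} \<in> F" and xe': "x \<notin> e'" using h2 unfolding P3_def by blast+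
    have h1': "\<forall>e''\<in>F. x \<in> e'' \<longrightarrow> e'' = e" using h1 unfolding P1_def by blast
    have xp: "{x,p} \<in> F" and xq: "{x,q} \<in> F" using h2' pq(2) by blast+
    have i1: "{x,p} = e" by (rule h1'[rule_format, OF xp]) simp
    have i2: "{x,q} = e" by (rule h1'[rule_format, OF xq]) simp
    have eq: "{x,p} = {x,q}" using i1 i2 by simp
    have "x \<noteq> p" "x \<noteq> q" using xe' pq(2) by blast+
    hence "p = q" using eq by (simp add: doubleton_eq_iff)
    thus ?thesis using pq(1) by simp
  qed
  have R3R2: "False" if h1: "e = {x, n+x}" and h2: "P3 e'" and ine: "e \<in> F" "e' \<in> F" for e e'
  proof -
    obtain p q where pq: "p \<noteq> q" "e' = {p,q}" using two ine(2) by blast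
    have xpq: "x \<noteq> p" "x \<noteq> q" using h2 pq unfolding P3_def by auto
    have pqC: "{p,q} \<in> Cor n" using pq ine F by auto
    have np: "n + x \<noteq> p" "n + x \<noteq> q"
    proof -
      show "n + x \<noteq> p"
      proof
        assume "n + x = p"
        hence "q + n = n + x" using Cor_high[of p q n] pqC by simp
        thus False using xpq by simp
      qed
      show "n + x \<noteq> q"
      proof
        assume "n + x = q"
        hence "p + n = n + x" using Cor_high[of q p n] pqC by (simp add: insert_commute)
        thus False using xpq by simp
      qed
    qed
    have e1: "{n+x, x} \<in> F" using h1 ine by (simp add: insert_commute)
    have e2: "{x,p} \<in> F" using h2 pq unfolding P3_def by auto
    have e3: "{p,q} \<in> F" using ine pq by simp
    show False by (rule not_pf[OF F(2) e1 e2 e3]) (use x np xpq pq in auto)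
  qed
  have R3R3: "e = e'" if h1: "P3 e" and h2: "P3 e'" and ine: "e \<in> F" "e' \<in> F" for e e'
  proof (rule ccontr)
    assume ne: "e \<noteq> e'"
    obtain p q where pq: "p \<noteq> q" "e = {p,q}" using two ine(1) by blast
    obtain p' q' where pq': "p' \<noteq> q'" "e' = {p',q'}" using two ine(2) by blast
    have "\<exists>u\<in>e'. u \<notin> e" using ne pq pq' by auto
    then obtain u where u: "u \<in> e'" "u \<notin> e" by blast
    have e1: "{u,x} \<in> F" using h2 u unfolding P3_def by (auto simp: insert_commute)
    have e2: "{x,p} \<in> F" using h1 pq unfolding P3_def by auto
    have e3: "{p,q} \<in> F" using ine pq by simp
    have "u \<noteq> x" using u h2 unfolding P3_def by blast
    moreover have "x \<noteq> p" "x \<noteq> q" using h1 pq unfolding P3_def by auto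
    moreover have "u \<noteq> p" "u \<noteq> q" using u pq by auto
    ultimately show False using not_pf[OF F(2) e1 e2 e3] pq(1) by blast
  qed
  have e1F: "e1 \<in> F" and e2F: "e2 \<in> F" using o1 o2 unfolding own_def by blast+
  have c1: "P1 e1 \<or> e1 = {x, n+x} \<or> P3 e1" using o1 unfolding own_def P1_def P3_def by blast
  have c2: "P1 e2 \<or> e2 = {x, n+x} \<or> P3 e2" using o2 unfolding own_def P1_def P3_def by blast
  show ?thesis
  proof (rule disjE[OF c1])
    assume a1: "P1 e1"
    show ?thesis
    proof (rule disjE[OF c2])
      assume "P1 e2"
      hence "x \<in> e2" unfolding P1_def by blast
      have h: "\<forall>e'\<in>F. x \<in> e' \<longrightarrow> e' = e1" using a1 unfolding P1_def by blast
      have "e2 = e1" by (rule h[rule_format, OF e2F \<open>x \<in> e2\<close>])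
      thus ?thesis by simp
    next
      assume "e2 = {x, n+x} \<or> P3 e2"
      thus ?thesis
      proof
        assume "e2 = {x, n+x}"
        hence "x \<in> e2" by simp
        have h: "\<forall>e'\<in>F. x \<in> e' \<longrightarrow> e' = e1" using a1 unfolding P1_def by blast
        have "e2 = e1" by (rule h[rule_format, OF e2F \<open>x \<in> e2\<close>])
        thus ?thesis by simp
      next
        assume "P3 e2" thus ?thesis using R3R1[OF a1 _ e1F e2F] by blast
      qed
    qed
  next
    assume "e1 = {x, n+x} \<or> P3 e1"
    thus ?thesis
    proof
      assume a2: "e1 = {x, n+x}"
      show ?thesis
      proof (rule disjE[OF c2])
        assume "P1 e2"
        have "x \<in> e1" using a2 by simp
        have h: "\<forall>e'\<in>F. x \<in> e' \<longrightarrow> e' = e2" using \<open>P1 e2\<close> unfolding P1_def by blast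
        show ?thesis by (rule h[rule_format, OF e1F \<open>x \<in> e1\<close>])
      next
        assume "e2 = {x, n+x} \<or> P3 e2"
        thus ?thesis
        proof
          assume "e2 = {x, n+x}" thus ?thesis using a2 by simp
        next
          assume "P3 e2" thus ?thesis using R3R2[OF a2 _ e1F e2F] by blast
        qed
      qed
    next
      assume a3: "P3 e1"
      show ?thesis
      proof (rule disjE[OF c2])
        assume "P1 e2" thus ?thesis using R3R1[OF _ a3 e2F e1F] by simp
      next
        assume "e2 = {x, n+x} \<or> P3 e2"
        thus ?thesis
        proof
          assume "e2 = {x, n+x}" thus ?thesis using R3R2[OF _ a3 e2F e1F] by blast
        next
          assume "P3 e2" thus ?thesis using R3R3[OF a3 _ e1F e2F] by blast
        qed
      qed
    qed
  qed
qed

lemma Cor_pf_le: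
  assumes F: "F \<subseteq> Cor n" "pf F"
  shows "card F \<le> n"
proof -
  define g where "g e = (SOME x. x < n \<and> own F n x e)" for e
  have g: "g e < n \<and> own F n (g e) e" if "e \<in> F" for e
    unfolding g_def by (rule someI_ex) (rule own_exists[OF F that])
  have "inj_on g F"
  proof (rule inj_onI)
    fix e1 e2 assume "e1 \<in> F" "e2 \<in> F" "g e1 = g e2"
    thus "e1 = e2" using g own_unique[OF F] by metis
  qed
  moreover have "g ` F \<subseteq> {..<n}" using g by blast
  ultimately have "card F \<le> card {..<n}"
    by (metis card_image card_mono finite_lessThan)
  thus ?thesis by simp
qed

lemma Cor_ex: "ex (Cor n) P3 \<le> n"
proof -
  obtain F where "F \<subseteq> Cor n" "pf F" "card F = ex (Cor n) P3"
    using ex_attained[of "Cor n"] Cor_sg unfolding sg_def by blast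
  thus ?thesis using Cor_pf_le by metis
qed

definition C4 :: "nat set set" where "C4 = {{0,1},{1,2},{2,3},{3,0}}"

lemma C4_ex: "ex C4 P3 \<le> 2"
proof -
  have fin: "finite C4" unfolding C4_def by simp
  have cC4: "card C4 = 4" unfolding C4_def by (simp add: doubleton_eq_iff)
  obtain F where F: "F \<subseteq> C4" "pf F" "card F = ex C4 P3"
    using ex_attained[OF fin] by blast
  have "card F \<le> 2"
  proof (rule ccontr)
    assume "\<not> card F \<le> 2"
    hence c3: "3 \<le> card F" by simp
    have miss: "a \<in> F \<or> b \<in> F" if ab: "a \<in> C4" "b \<in> C4" "a \<noteq> b" for a b
    proof (rule ccontr)
      assume "\<not> (a \<in> F \<or> b \<in> F)"
      hence "F \<subseteq> C4 - {a,b}" using F(1) by blast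
      moreover have "card (C4 - {a,b}) = card C4 - card {a,b}"
        by (rule card_Diff_subset) (use ab in auto)
      moreover have "card {a,b} = 2" using ab(3) by simp
      ultimately have "card F \<le> 2" using fin cC4 by (metis card_mono finite_Diff diff_numeral_special(9) numeral_Bit0 add_diff_cancel_right')
      thus False using c3 by simp
    qed
    have inC: "{0::nat,1} \<in> C4" "{1::nat,2} \<in> C4" "{2::nat,3} \<in> C4" "{3::nat,0} \<in> C4"
      unfolding C4_def by auto
    have ne: "{0::nat,1} \<noteq> {1,2}" "{0::nat,1} \<noteq> {2,3}" "{0::nat,1} \<noteq> {3,0}"
      "{1::nat,2} \<noteq> {2,3}" "{1::nat,2} \<noteq> {3,0}" "{2::nat,3} \<noteq> {3,0}"
      by (auto simp: doubleton_eq_iff)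
    have p1: "\<not> ({0::nat,1} \<in> F \<and> {1,2} \<in> F \<and> {2,3} \<in> F)"
      using not_pf[OF F(2), of 0 1 2 3] by auto
    have p2: "\<not> ({1::nat,2} \<in> F \<and> {2,3} \<in> F \<and> {3,0} \<in> F)"
      using not_pf[OF F(2), of 1 2 3 0] by auto
    have p3: "\<not> ({2::nat,3} \<in> F \<and> {3,0} \<in> F \<and> {0,1} \<in> F)"
      using not_pf[OF F(2), of 2 3 0 1] by auto
    have p4: "\<not> ({3::nat,0} \<in> F \<and> {0,1} \<in> F \<and> {1,2} \<in> F)"
      using not_pf[OF F(2), of 3 0 1 2] by auto
    have m12: "{0::nat,1} \<in> F \<or> {1,2} \<in> F" by (rule miss[OF inC(1) inC(2) ne(1)])
    have m13: "{0::nat,1} \<in> F \<or> {2,3} \<in> F" by (rule miss[OF inC(1) inC(3) ne(2)])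
    have m14: "{0::nat,1} \<in> F \<or> {3,0} \<in> F" by (rule miss[OF inC(1) inC(4) ne(3)])
    have m23: "{1::nat,2} \<in> F \<or> {2,3} \<in> F" by (rule miss[OF inC(2) inC(3) ne(4)])
    have m24: "{1::nat,2} \<in> F \<or> {3,0} \<in> F" by (rule miss[OF inC(2) inC(4) ne(5)])
    have m34: "{2::nat,3} \<in> F \<or> {3,0} \<in> F" by (rule miss[OF inC(3) inC(4) ne(6)])
    show False using p1 p2 p3 p4 m12 m13 m14 m23 m24 m34 by blast
  qed
  thus ?thesis using F(3) by simp
qed

lemma C4_sg: "sg C4" unfolding sg_def C4_def by auto
lemma C4_card: "card C4 = 4" unfolding C4_def by (simp add: doubleton_eq_iff)


lemma sg_simple: "sg G \<longleftrightarrow> simple_graph G" unfolding sg_def simple_graph_def ..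

theorem theorem3p14:
  fixes k :: nat
  assumes "k \<ge> 1"
  shows "(\<forall>G :: 'a set set. simple_graph G \<and> ex G P3 < k \<longrightarrow>
            num_edges G \<le> (k choose 2) + (if k = 3 then 1 else 0))
         \<and> E_H P3 k = enat ((k choose 2) + (if k = 3 then 1 else 0))"
proof
  show "\<forall>G :: 'a set set. simple_graph G \<and> ex G P3 < k \<longrightarrow>
            num_edges G \<le> (k choose 2) + (if k = 3 then 1 else 0)"
    using part1[OF assms] by blast
  define N where "N = (k choose 2) + (if k = 3 then 1 else 0)"
  obtain Gw :: "nat set set" where Gw: "simple_graph Gw" "ex Gw P3 < k" "num_edges Gw = N"
  proof (cases "k = 3")
    case True
    have "simple_graph C4" using C4_sg sg_simple by blast
    moreover have "ex C4 P3 < k" using C4_ex True by simp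
    moreover have "num_edges C4 = N" unfolding num_edges_def N_def using C4_card True by (simp add: choose_two)
    ultimately show ?thesis using that by blast
  next
    case False
    obtain m where km: "k = Suc m" using assms by (cases k) auto
    have "simple_graph (Cor m)" using Cor_sg sg_simple by blast
    moreover have "ex (Cor m) P3 < k" using Cor_ex[of m] km by simp
    moreover have "num_edges (Cor m) = N"
    proof -
      have "(Suc m choose 2) = (m choose 1) + (m choose 2)"
        using binomial_Suc_Suc[of m 1] by (simp add: numeral_2_eq_2)
      thus ?thesis unfolding num_edges_def N_def using Cor_card[of m] km False by simp
    qed
    ultimately show ?thesis using that by blast
  qed
  have "E_H P3 k = enat N"
    unfolding E_H_def
  proof (rule Sup_eqI)
    fix y assume "y \<in> {enat (num_edges G) |G :: nat set set. simple_graph G \<and> ex G P3 < k}"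
    then obtain G :: "nat set set" where G: "y = enat (num_edges G)" "simple_graph G" "ex G P3 < k" by blast
    have "num_edges G \<le> N" using part1[OF assms G(2) G(3)] unfolding N_def .
    thus "y \<le> enat N" using \<open>y = enat (num_edges G)\<close> by simp
  next
    fix y assume h: "\<And>z. z \<in> {enat (num_edges G) |G :: nat set set. simple_graph G \<and> ex G P3 < k} \<Longrightarrow> z \<le> y"
    have mem: "enat (num_edges Gw) \<in> {enat (num_edges G) |G :: nat set set. simple_graph G \<and> ex G P3 < k}"
      using Gw(1,2) by blast
    show "enat N \<le> y" using h[OF mem] Gw(3) by simp
  qed
  thus "E_H P3 k = enat ((k choose 2) + (if k = 3 then 1 else 0))" unfolding N_def .
qed


end
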